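(* Let $\mathcal D=\{\phi_j\}_{j=1}^\infty$ be a dictionary in a Banach space $\mathbb X$. Assume that either (i) there is $k_1>0$ such that $\Sigma_1(\mathcal D)$ satisfies $A_1(k_1,D)$ for every $D<\infty$, or (ii) there is a positive increasing sequence $H$ such that $\Sigma_1(\mathcal D)$ satisfies $A_3(H,D)$ for every $D<\infty$. Then there exist $\{\phi_j^*\}_{j\ge1}\subset\mathbb X^*$ such that $\phi_j^*(\phi_i)=0$ for $i\ne j$ and $\phi_j^*(\phi_j)=1$.
   Context: A dictionary is a family of nonzero vectors whose closed linear span is $\mathbb X$. Property $A_1(k_N,D)$ of $\Sigma_N$: $\|\sum_{j\in A}a_j\phi_j\|\le k_N\|\sum_{j\in B}a_j\phi_j\|$ for all scalars $a_j$ and all finite index sets $A\subset B$ with $|A|\le N$, $|B|<D$. Property $A_3(H,D)$ of $\Sigma_N$: $\sum_{j\in A}|a_j|\le H(|A|)\|\sum_{j\in B}a_j\phi_j\|$ for all scalars $a_j$ and all finite $A\subset B$ with $|A|\le N$, $|B|<D$. *)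

theory Defs
  imports "HOL-Analysis.Analysis"
begin

definition dictionary :: "(nat \<Rightarrow> 'a::real_normed_vector) \<Rightarrow> bool" where
  "dictionary \<phi> \<longleftrightarrow> (\<forall>j. \<phi> j \<noteq> 0) \<and> closure (span (range \<phi>)) = UNIV"

definition propA1 :: "(nat \<Rightarrow> 'a::real_normed_vector) \<Rightarrow> nat \<Rightarrow> real \<Rightarrow> nat \<Rightarrow> bool" where
  "propA1 \<phi> N k D \<longleftrightarrow>
     (\<forall>(a::nat \<Rightarrow> real) A B. finite B \<and> A \<subseteq> B \<and> card A \<le> N \<and> card B < D \<longrightarrow>
        norm (\<Sum>j\<in>A. a j *\<^sub>R \<phi> j) \<le> k * norm (\<Sum>j\<in>B. a j *\<^sub>R \<phi> j))"

definition propA3 :: "(nat \<Rightarrow> 'a::real_normed_vector) \<Rightarrow> nat \<Rightarrow> (nat \<Rightarrow> real) \<Rightarrow> nat \<Rightarrow> bool" where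
  "propA3 \<phi> N H D \<longleftrightarrow>
     (\<forall>(a::nat \<Rightarrow> real) A B. finite B \<and> A \<subseteq> B \<and> card A \<le> N \<and> card B < D \<longrightarrow>
        (\<Sum>j\<in>A. \<bar>a j\<bar>) \<le> H (card A) * norm (\<Sum>j\<in>B. a j *\<^sub>R \<phi> j))"

end

theory Submission
  imports Defs
begin

definition rep :: "(nat \<Rightarrow> 'a::real_normed_vector) \<Rightarrow> 'a \<Rightarrow> (nat \<Rightarrow> real) \<Rightarrow> bool" where
  "rep \<phi> x a \<longleftrightarrow> (\<exists>B. finite B \<and> (\<forall>i. i \<notin> B \<longrightarrow> a i = 0) \<and> x = (\<Sum>i\<in>B. a i *\<^sub>R \<phi> i))"

lemma rep_sum_any:
  fixes \<phi> :: "nat \<Rightarrow> 'a::real_vector"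
  assumes "finite B" "\<forall>i. i \<notin> B \<longrightarrow> a i = 0" "finite U" "B \<subseteq> U"
  shows "(\<Sum>i\<in>U. a i *\<^sub>R \<phi> i) = (\<Sum>i\<in>B. a i *\<^sub>R \<phi> i)"
  by (rule sum.mono_neutral_right) (use assms in auto)

lemma rep_exists:
  assumes "x \<in> span (range \<phi>)"
  shows "\<exists>a. rep \<phi> x a"
  using assms
proof (induction rule: span_induct_alt)
  case base
  show ?case unfolding rep_def by (rule exI[of _ "\<lambda>_. 0"], rule exI[of _ "{}"]) auto
next
  case (step c x y)
  then obtain k where xk: "x = \<phi> k" by auto
  from step obtain a B where B: "finite B" "\<forall>i. i \<notin> B \<longrightarrow> a i = 0" "y = (\<Sum>i\<in>B. a i *\<^sub>R \<phi> i)"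
    unfolding rep_def by auto
  define a' where "a' = (\<lambda>i. a i + (if i = k then c else 0))"
  have s1: "(\<Sum>i\<in>insert k B. a i *\<^sub>R \<phi> i) = y"
    using rep_sum_any[OF B(1) B(2), of "insert k B"] B by auto
  have s2: "(\<Sum>i\<in>insert k B. (if i = k then c else 0) *\<^sub>R \<phi> i) = c *\<^sub>R \<phi> k"
  proof -
    have "(\<Sum>i\<in>insert k B. (if i = k then c else 0) *\<^sub>R \<phi> i) = (\<Sum>i\<in>insert k B. (if i = k then c *\<^sub>R \<phi> i else 0))"
      by (rule sum.cong) auto
    also have "\<dots> = c *\<^sub>R \<phi> k" using B(1) by (simp add: sum.delta)
    finally show ?thesis .
  qed
  have "(\<Sum>i\<in>insert k B. a' i *\<^sub>R \<phi> i) = c *\<^sub>R x + y"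
    unfolding a'_def scaleR_add_left sum.distrib s1 s2 xk by simp
  moreover have "\<forall>i. i \<notin> insert k B \<longrightarrow> a' i = 0" using B unfolding a'_def by auto
  ultimately show ?case unfolding rep_def using B(1)
    by (intro exI[of _ a'] exI[of _ "insert k B"]) auto
qed

lemma rep_span:
  assumes "rep \<phi> x a" shows "x \<in> span (range \<phi>)"
proof -
  obtain B where B: "x = (\<Sum>i\<in>B. a i *\<^sub>R \<phi> i)"
    using assms unfolding rep_def by auto
  show ?thesis unfolding B by (rule span_sum, rule span_scale, rule span_base) auto
qed

lemma rep_add:
  assumes "rep \<phi> x a" "rep \<phi> y b" shows "rep \<phi> (x + y) (\<lambda>i. a i + b i)"
proof -
  obtain B where B: "finite B" "\<forall>i. i \<notin> B \<longrightarrow> a i = 0" "x = (\<Sum>i\<in>B. a i *\<^sub>R \<phi> i)"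
    using assms(1) unfolding rep_def by auto
  obtain B' where B': "finite B'" "\<forall>i. i \<notin> B' \<longrightarrow> b i = 0" "y = (\<Sum>i\<in>B'. b i *\<^sub>R \<phi> i)"
    using assms(2) unfolding rep_def by auto
  have "x = (\<Sum>i\<in>B \<union> B'. a i *\<^sub>R \<phi> i)" using rep_sum_any[OF B(1,2), of "B \<union> B'" \<phi>] B B' by auto
  moreover have "y = (\<Sum>i\<in>B \<union> B'. b i *\<^sub>R \<phi> i)" using rep_sum_any[OF B'(1,2), of "B \<union> B'" \<phi>] B B' by auto
  ultimately have "x + y = (\<Sum>i\<in>B \<union> B'. (a i + b i) *\<^sub>R \<phi> i)"
    by (simp add: scaleR_add_left sum.distrib)
  then show ?thesis unfolding rep_def using B B'
    by (intro exI[of _ "B \<union> B'"]) auto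
qed

lemma rep_scale:
  assumes "rep \<phi> x a" shows "rep \<phi> (c *\<^sub>R x) (\<lambda>i. c * a i)"
proof -
  obtain B where B: "finite B" "\<forall>i. i \<notin> B \<longrightarrow> a i = 0" "x = (\<Sum>i\<in>B. a i *\<^sub>R \<phi> i)"
    using assms(1) unfolding rep_def by auto
  have "c *\<^sub>R x = (\<Sum>i\<in>B. (c * a i) *\<^sub>R \<phi> i)" using B(3) by (simp add: scaleR_sum_right)
  then show ?thesis unfolding rep_def using B by (intro exI[of _ B]) auto
qed

lemma coef_bound:
  fixes \<phi> :: "nat \<Rightarrow> 'a::real_normed_vector"
  assumes "dictionary \<phi>"
    and "(\<exists>k1>0. \<forall>D. propA1 \<phi> 1 k1 D) \<or>
         (\<exists>H::nat \<Rightarrow> real. (\<forall>n. H n > 0) \<and> mono H \<and> (\<forall>D. propA3 \<phi> 1 H D))"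
  shows "\<exists>C>0. \<forall>B a. finite B \<longrightarrow> j \<in> B \<longrightarrow> \<bar>a j\<bar> \<le> C * norm (\<Sum>i\<in>B. a i *\<^sub>R \<phi> i)"
  using assms(2)
proof
  assume "\<exists>k1>0. \<forall>D. propA1 \<phi> 1 k1 D"
  then obtain k1 where k1: "k1 > 0" "\<And>D. propA1 \<phi> 1 k1 D" by auto
  have nz: "norm (\<phi> j) > 0" using assms(1) unfolding dictionary_def by auto
  show ?thesis
  proof (intro exI[of _ "k1 / norm (\<phi> j)"] conjI allI impI)
    show "0 < k1 / norm (\<phi> j)" using k1 nz by simp
    fix B a assume B: "finite B" "j \<in> B"
    have "norm (\<Sum>i\<in>{j}. a i *\<^sub>R \<phi> i) \<le> k1 * norm (\<Sum>i\<in>B. a i *\<^sub>R \<phi> i)"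
      using k1(2)[of "Suc (card B)", unfolded propA1_def] B
      by (drule_tac spec[of _ a], drule_tac spec[of _ "{j}"], drule_tac spec[of _ B]) simp
    then have "\<bar>a j\<bar> * norm (\<phi> j) \<le> k1 * norm (\<Sum>i\<in>B. a i *\<^sub>R \<phi> i)" by simp
    then show "\<bar>a j\<bar> \<le> k1 / norm (\<phi> j) * norm (\<Sum>i\<in>B. a i *\<^sub>R \<phi> i)"
      using nz by (simp add: field_simps)
  qed
next
  assume "\<exists>H::nat \<Rightarrow> real. (\<forall>n. H n > 0) \<and> mono H \<and> (\<forall>D. propA3 \<phi> 1 H D)"
  then obtain H :: "nat \<Rightarrow> real" where H: "\<And>n. H n > 0" "\<And>D. propA3 \<phi> 1 H D" by auto
  show ?thesis
  proof (intro exI[of _ "H 1"] conjI allI impI)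
    show "0 < H 1" using H by simp
    fix B a assume B: "finite B" "j \<in> B"
    have "(\<Sum>i\<in>{j}. \<bar>a i\<bar>) \<le> H (card {j}) * norm (\<Sum>i\<in>B. a i *\<^sub>R \<phi> i)"
      using H(2)[of "Suc (card B)", unfolded propA3_def] B
      by (drule_tac spec[of _ a], drule_tac spec[of _ "{j}"], drule_tac spec[of _ B]) simp
    then show "\<bar>a j\<bar> \<le> H 1 * norm (\<Sum>i\<in>B. a i *\<^sub>R \<phi> i)" by simp
  qed
qed

lemma rep_bound:
  assumes C: "\<forall>B a. finite B \<longrightarrow> j \<in> B \<longrightarrow> \<bar>a j\<bar> \<le> C * norm (\<Sum>i\<in>B. a i *\<^sub>R \<phi> i)"
    and "C > 0" and r: "rep \<phi> x a"
  shows "\<bar>a j\<bar> \<le> C * norm x"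
proof -
  obtain B where B: "finite B" "\<forall>i. i \<notin> B \<longrightarrow> a i = 0" "x = (\<Sum>i\<in>B. a i *\<^sub>R \<phi> i)"
    using r unfolding rep_def by auto
  show ?thesis
  proof (cases "j \<in> B")
    case True then show ?thesis using C B by auto
  next
    case False then show ?thesis using B \<open>C > 0\<close> by simp
  qed
qed

lemma rep_unique:
  assumes C: "\<forall>j. \<exists>C>0. \<forall>B a. finite B \<longrightarrow> j \<in> B \<longrightarrow> \<bar>a j\<bar> \<le> C * norm (\<Sum>i\<in>B. a i *\<^sub>R \<phi> i)"
    and "rep \<phi> x a" "rep \<phi> x b"
  shows "a = b"
proof
  fix j
  from C obtain Cj where Cj: "Cj > 0" "\<forall>B a. finite B \<longrightarrow> j \<in> B \<longrightarrow> \<bar>a j\<bar> \<le> Cj * norm (\<Sum>i\<in>B. a i *\<^sub>R \<phi> i)"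
    by blast
  have "rep \<phi> (x + (-1) *\<^sub>R x) (\<lambda>i. a i + (-1) * b i)"
    by (rule rep_add[OF assms(2) rep_scale[OF assms(3)]])
  then have "\<bar>a j + (-1) * b j\<bar> \<le> Cj * norm (x + (-1) *\<^sub>R x)"
    by (rule rep_bound[OF Cj(2) Cj(1)])
  then show "a j = b j" by simp
qed

lemma functional_exists:
  fixes \<phi> :: "nat \<Rightarrow> 'a::banach"
  assumes Call: "\<forall>j. \<exists>C>0. \<forall>B a. finite B \<longrightarrow> j \<in> B \<longrightarrow> \<bar>a j\<bar> \<le> C * norm (\<Sum>i\<in>B. a i *\<^sub>R \<phi> i)"
    and dense: "closure (span (range \<phi>)) = UNIV"
  shows "\<exists>g :: 'a \<Rightarrow> real. bounded_linear g \<and> (\<forall>i. g (\<phi> i) = (if i = j then 1 else 0))"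
proof -
  define S where "S = span (range \<phi>)"
  obtain C where C: "C > 0" "\<forall>B a. finite B \<longrightarrow> j \<in> B \<longrightarrow> \<bar>a j\<bar> \<le> C * norm (\<Sum>i\<in>B. a i *\<^sub>R \<phi> i)"
    using Call by blast
  define f where "f x = (THE a. rep \<phi> x a) j" for x
  have fval: "f x = a j" if r: "rep \<phi> x a" for x a
  proof -
    have "(THE a. rep \<phi> x a) = a"
    proof (rule the_equality)
      show "rep \<phi> x a" by (rule r)
      fix b assume "rep \<phi> x b"
      then show "b = a" using rep_unique[OF Call r] by simp
    qed
    then show ?thesis unfolding f_def by simp
  qed
  have exr: "\<exists>a. rep \<phi> x a" if "x \<in> S" for x using rep_exists that unfolding S_def by blast
  have fadd: "f (x + y) = f x + f y" if xy: "x \<in> S" "y \<in> S" for x y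
  proof -
    obtain a b where "rep \<phi> x a" "rep \<phi> y b" using exr xy by blast
    then show ?thesis using rep_add fval by metis
  qed
  have fscale: "f (c *\<^sub>R x) = c * f x" if xS: "x \<in> S" for x c
  proof -
    obtain a where "rep \<phi> x a" using exr xS by blast
    then show ?thesis using rep_scale fval by metis
  qed
  have fbd: "\<bar>f x\<bar> \<le> C * norm x" if xS: "x \<in> S" for x
  proof -
    obtain a where "rep \<phi> x a" using exr xS by blast
    then show ?thesis using rep_bound[OF C(2) C(1)] fval by metis
  qed
  have uc: "uniformly_continuous_on S f"
    unfolding uniformly_continuous_on_def
  proof (intro allI impI)
    fix e :: real assume e: "e > 0"
    show "\<exists>d>0. \<forall>x\<in>S. \<forall>x'\<in>S. dist x' x < d \<longrightarrow> dist (f x') (f x) < e"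
    proof (intro exI[of _ "e / C"] conjI ballI impI)
      show "e / C > 0" using e C by simp
      fix x x' assume xs: "x \<in> S" "x' \<in> S" and d: "dist x' x < e / C"
      have m: "(-1) *\<^sub>R x \<in> S" using xs unfolding S_def by (simp add: span_neg)
      have "f x' - f x = f (x' + (-1) *\<^sub>R x)" using fadd[OF xs(2) m] fscale[OF xs(1), of "-1"] by simp
      moreover have "\<bar>f (x' + (-1) *\<^sub>R x)\<bar> \<le> C * norm (x' - x)"
        using fbd[of "x' + (-1) *\<^sub>R x"] xs m unfolding S_def by (simp add: span_diff)
      moreover have "C * norm (x' - x) < e" using d C by (simp add: dist_norm field_simps)
      ultimately show "dist (f x') (f x) < e" by (simp add: dist_real_def)
    qed
  qed
  obtain g where g: "uniformly_continuous_on (closure S) g" "\<And>x. x \<in> S \<Longrightarrow> f x = g x"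
    using uniformly_continuous_on_extension_on_closure[OF uc] by metis
  have cS: "closure S = UNIV" using dense unfolding S_def .
  have gc: "continuous_on UNIV g" using g(1) cS uniformly_continuous_imp_continuous by metis
  have a1: "g (x + y) = g x + g y" if y: "y \<in> S" for x y
  proof -
    have cl: "closed {x. g (x + y) = g x + g y}"
      by (intro closed_Collect_eq continuous_on_add continuous_on_compose2[OF gc] continuous_on_const continuous_on_id) auto
    have "S \<subseteq> {x. g (x + y) = g x + g y}"
    proof
      fix x assume x: "x \<in> S"
      have "x + y \<in> S" using x y unfolding S_def by (simp add: span_add)
      then show "x \<in> {x. g (x + y) = g x + g y}" using g(2)[of "x+y"] g(2)[of x] g(2)[of y] fadd[OF x y] x y by simp
    qed
    then have "closure S \<subseteq> {x. g (x + y) = g x + g y}" using cl closure_minimal by blast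
    then show ?thesis using cS by auto
  qed
  have a2: "g (x + y) = g x + g y" for x y
  proof -
    have cl: "closed {y. g (x + y) = g x + g y}"
      by (intro closed_Collect_eq continuous_on_add continuous_on_compose2[OF gc] continuous_on_const continuous_on_id) auto
    have "S \<subseteq> {y. g (x + y) = g x + g y}" using a1 by auto
    then have "closure S \<subseteq> {y. g (x + y) = g x + g y}" using cl closure_minimal by blast
    then show ?thesis using cS by auto
  qed
  have sc: "g (c *\<^sub>R x) = c *\<^sub>R g x" for c x
  proof -
    have cl: "closed {x. g (c *\<^sub>R x) = c * g x}"
      by (intro closed_Collect_eq continuous_on_mult continuous_on_scaleR continuous_on_compose2[OF gc] continuous_on_const continuous_on_id) auto
    have "S \<subseteq> {x. g (c *\<^sub>R x) = c * g x}"
    proof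
      fix x assume x: "x \<in> S"
      have "c *\<^sub>R x \<in> S" using x unfolding S_def by (simp add: span_scale)
      then show "x \<in> {x. g (c *\<^sub>R x) = c * g x}" using g(2)[of "c *\<^sub>R x"] g(2)[of x] fscale[OF x] x by simp
    qed
    then have "closure S \<subseteq> {x. g (c *\<^sub>R x) = c * g x}" using cl closure_minimal by blast
    then show ?thesis using cS by auto
  qed
  have bd: "norm (g x) \<le> norm x * C" for x
  proof -
    have cl: "closed {x. \<bar>g x\<bar> \<le> C * norm x}"
      by (intro closed_Collect_le continuous_on_rabs continuous_on_mult continuous_on_norm gc continuous_on_const continuous_on_id)
    have "S \<subseteq> {x. \<bar>g x\<bar> \<le> C * norm x}" using g(2) fbd by auto
    then have "closure S \<subseteq> {x. \<bar>g x\<bar> \<le> C * norm x}" using cl closure_minimal by blast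
    then show ?thesis using cS by (auto simp: mult.commute)
  qed
  have bl: "bounded_linear g" by (rule bounded_linear_intro[OF a2 sc bd])
  have vals: "g (\<phi> i) = (if i = j then 1 else 0)" for i
  proof -
    have r: "rep \<phi> (\<phi> i) (\<lambda>k. if k = i then 1 else 0)"
      unfolding rep_def by (intro exI[of _ "{i}"]) auto
    have "\<phi> i \<in> S" unfolding S_def by (simp add: span_base)
    then show ?thesis using g(2) fval[OF r] by auto
  qed
  show ?thesis using bl vals by blast
qed

theorem lemma2p2:
  fixes \<phi> :: "nat \<Rightarrow> 'a::banach"
  assumes "dictionary \<phi>"
    and "(\<exists>k1>0. \<forall>D. propA1 \<phi> 1 k1 D) \<or>
         (\<exists>H::nat \<Rightarrow> real. (\<forall>n. H n > 0) \<and> mono H \<and> (\<forall>D. propA3 \<phi> 1 H D))"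
  shows "\<exists>\<phi>s :: nat \<Rightarrow> 'a \<Rightarrow> real. (\<forall>j. bounded_linear (\<phi>s j)) \<and>
           (\<forall>i j. \<phi>s j (\<phi> i) = (if i = j then 1 else 0))"
proof -
  have Call: "\<forall>j. \<exists>C>0. \<forall>B a. finite B \<longrightarrow> j \<in> B \<longrightarrow> \<bar>a j\<bar> \<le> C * norm (\<Sum>i\<in>B. a i *\<^sub>R \<phi> i)"
    using coef_bound[OF assms] by blast
  have dense: "closure (span (range \<phi>)) = UNIV" using assms(1) unfolding dictionary_def by auto
  have "\<forall>j. \<exists>g :: 'a \<Rightarrow> real. bounded_linear g \<and> (\<forall>i. g (\<phi> i) = (if i = j then 1 else 0))"
    using functional_exists[OF Call dense] by blast
  then obtain G :: "nat \<Rightarrow> 'a \<Rightarrow> real" where "\<forall>j. bounded_linear (G j) \<and> (\<forall>i. G j (\<phi> i) = (if i = j then 1 else 0))"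
    by metis
  then show ?thesis by (intro exI[of _ G]) auto
qed

end
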